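(* For every backward trie $\mathsf{T}_b$ with $n\ge 3$ nodes, the suffix tree $\mathsf{STree}(\mathsf{T}_b)$ has at most $2n-3$ nodes and at most $2n-4$ edges, independently of the alphabet size.
   Context: An alphabet $\Sigma$ is a finite ordered set of characters. A forward trie $\mathsf{T}_f$ is a rooted tree with $n$ nodes in which every edge is directed from parent to child and labeled by a single character of $\Sigma$, such that the edges leaving any node carry pairwise distinct labels. The backward trie $\mathsf{T}_b$ is obtained from $\mathsf{T}_f$ by reversing the direction of every edge while keeping its label; it has the same $n$ nodes and the same root $r$. For nodes $u,v$ with $u$ an ancestor of $v$ (possibly $u=v$), $\mathrm{str}_b(v,u)$ is the string of labels read along the reversed (upward) path from $v$ to $u$. Define $\mathrm{Suffix}(\mathsf{T}_b)=\{\mathrm{str}_b(v,r): v \text{ a node}\}$. For a finite set $S$ of strings, its compact tree is obtained from the trie of all prefixes of strings in $S$ (one node per prefix, the root being the empty string, an edge labeled $a$ from $X$ to $Xa$) by deleting every non-root node that has exactly one child and merging its two incident edges into one edge labeled by the concatenation of their labels. The suffix tree $\mathsf{STree}(\mathsf{T}_b)$ is the compact tree of $\mathrm{Suffix}(\mathsf{T}_b)$. *)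

theory Defs
  imports "HOL-Library.Sublist"
begin

text \<open>A (forward) trie with node set V, root r, parent map par and edge labels:
  for a non-root node v, the edge par v -> v carries label lab v.
  The backward trie has the same nodes and the reversed edges v -> par v with the same labels.\<close>

definition is_trie :: "'v set \<Rightarrow> 'v \<Rightarrow> ('v \<Rightarrow> 'v) \<Rightarrow> ('v \<Rightarrow> 'c) \<Rightarrow> bool" where
  "is_trie V r par lab \<longleftrightarrow>
     finite V \<and> r \<in> V \<and>
     (\<forall>v \<in> V - {r}. par v \<in> V) \<and>
     (\<forall>v \<in> V. \<exists>k. (par ^^ k) v = r) \<and>
     (\<forall>v \<in> V - {r}. \<forall>w \<in> V - {r}. v \<noteq> w \<and> par v = par w \<longrightarrow> lab v \<noteq> lab w)"

definition depth :: "'v \<Rightarrow> ('v \<Rightarrow> 'v) \<Rightarrow> 'v \<Rightarrow> nat" where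
  "depth r par v = (LEAST k. (par ^^ k) v = r)"

definition str_b :: "'v \<Rightarrow> ('v \<Rightarrow> 'v) \<Rightarrow> ('v \<Rightarrow> 'c) \<Rightarrow> 'v \<Rightarrow> 'c list" where
  "str_b r par lab v = map (\<lambda>i. lab ((par ^^ i) v)) [0..<depth r par v]"

definition Suffix_b :: "'v set \<Rightarrow> 'v \<Rightarrow> ('v \<Rightarrow> 'v) \<Rightarrow> ('v \<Rightarrow> 'c) \<Rightarrow> 'c list set" where
  "Suffix_b V r par lab = str_b r par lab ` V"

text \<open>Compact tree of a set of strings S: nodes of the trie of all prefixes of S,
  minus the non-root nodes with exactly one child; edges join a kept node to its
  nearest kept proper descendant (merged unary paths).\<close>

definition prefixes_of :: "'c list set \<Rightarrow> 'c list set" where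
  "prefixes_of S = {x. \<exists>s \<in> S. prefix x s}"

definition children_of :: "'c list set \<Rightarrow> 'c list \<Rightarrow> 'c list set" where
  "children_of S x = {y \<in> prefixes_of S. \<exists>a. y = x @ [a]}"

definition ctree_nodes :: "'c list set \<Rightarrow> 'c list set" where
  "ctree_nodes S = {x \<in> prefixes_of S. x = [] \<or> card (children_of S x) \<noteq> 1}"

definition ctree_edges :: "'c list set \<Rightarrow> ('c list \<times> 'c list) set" where
  "ctree_edges S = {(x, y). x \<in> ctree_nodes S \<and> y \<in> ctree_nodes S \<and> strict_prefix x y \<and>
      \<not> (\<exists>z \<in> ctree_nodes S. strict_prefix x z \<and> strict_prefix z y)}"

end

theory Submission
  imports Defs
begin

lemma P_finite: "finite S \<Longrightarrow> finite (prefixes_of S)"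
proof -
  assume "finite S"
  have "prefixes_of S \<subseteq> (\<Union>s\<in>S. set (prefixes s))"
    unfolding prefixes_of_def by auto
  then show ?thesis using \<open>finite S\<close> by (meson finite_UN_I finite_set finite_subset)
qed

lemma P_closed: "y \<in> prefixes_of S \<Longrightarrow> prefix x y \<Longrightarrow> x \<in> prefixes_of S"
  unfolding prefixes_of_def using prefix_order.trans by blast

lemma children_finite: "finite S \<Longrightarrow> finite (children_of S x)"
  unfolding children_of_def using P_finite by (metis (no_types, lifting) finite_subset mem_Collect_eq subsetI)

lemma ctree_bound:
  fixes S :: "'c list set"
  assumes fin: "finite S" and e: "[] \<in> S" and a: "[a] \<in> S" and cS: "card S \<le> n" and n3: "3 \<le> n"
  shows "card (ctree_nodes S) \<le> 2*n-3 \<and> card (ctree_edges S) \<le> 2*n-4"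
proof -
  define P where "P = prefixes_of S"
  define c where "c = (\<lambda>x. card (children_of S x))"
  define Lf where "Lf = {x\<in>P. c x = 0}"
  define On where "On = {x\<in>P. c x = 1}"
  define Br where "Br = {x\<in>P. c x \<ge> 2}"
  have finP: "finite P" using P_finite[OF fin] P_def by simp
  have SP: "S \<subseteq> P" unfolding P_def prefixes_of_def by auto
  have eP: "[] \<in> P" using SP e by auto
  have cfin: "\<And>x. finite (children_of S x)" using children_finite[OF fin] .
  have chP: "\<And>x. children_of S x \<subseteq> P" unfolding children_of_def P_def by auto
  have PU: "P - {[]} = (\<Union>x\<in>P. children_of S x)"
  proof
    show "P - {[]} \<subseteq> (\<Union>x\<in>P. children_of S x)"
    proof
      fix y assume y: "y \<in> P - {[]}"
      then have yy: "y = butlast y @ [last y]" by simp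
      have "prefix (butlast y) y" by (metis prefixI yy)
      then have "butlast y \<in> P" using y P_closed P_def by blast
      moreover have "y \<in> children_of S (butlast y)" using y yy unfolding children_of_def P_def by blast
      ultimately show "y \<in> (\<Union>x\<in>P. children_of S x)" by blast
    qed
    show "(\<Union>x\<in>P. children_of S x) \<subseteq> P - {[]}" using chP unfolding children_of_def by auto
  qed
  have disj: "\<forall>i\<in>P. \<forall>j\<in>P. i \<noteq> j \<longrightarrow> children_of S i \<inter> children_of S j = {}"
    unfolding children_of_def by auto
  have "card (P - {[]}) = (\<Sum>x\<in>P. c x)"
    unfolding PU c_def using card_UN_disjoint[OF finP _ disj] cfin by simp
  then have sumc: "(\<Sum>x\<in>P. c x) = card P - 1" using eP finP by simp
  have Pun: "P = Lf \<union> On \<union> Br" unfolding Lf_def On_def Br_def by auto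
  have fL: "finite Lf" "finite On" "finite Br" using finP unfolding Lf_def On_def Br_def by auto
  have d1: "Lf \<inter> On = {}" "(Lf \<union> On) \<inter> Br = {}" unfolding Lf_def On_def Br_def by auto
  have cardP: "card P = card Lf + card On + card Br"
    using Pun fL d1 by (simp add: card_Un_disjoint)
  have "(\<Sum>x\<in>P. c x) = (\<Sum>x\<in>Lf. c x) + (\<Sum>x\<in>On. c x) + (\<Sum>x\<in>Br. c x)"
    using Pun fL d1 by (simp add: sum.union_disjoint)
  moreover have "(\<Sum>x\<in>Lf. c x) = 0" unfolding Lf_def by simp
  moreover have "(\<Sum>x\<in>On. c x) = card On" unfolding On_def by simp
  moreover have "(\<Sum>x\<in>Br. (2::nat)) \<le> (\<Sum>x\<in>Br. c x)" by (rule sum_mono) (simp add: Br_def)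
  moreover have "(\<Sum>x\<in>Br. (2::nat)) = 2 * card Br" by simp
  moreover have "card P \<ge> 1" using eP finP by (metis One_nat_def Suc_leI card_gt_0_iff empty_iff)
  ultimately have BL: "card Br + 1 \<le> card Lf"
    using sumc cardP by linarith
  have aP: "[a] \<in> P" using a SP by auto
  have ach: "[a] \<in> children_of S []" using aP unfolding children_of_def P_def by auto
  have c0: "c [] \<noteq> 0" unfolding c_def using ach cfin[of "[]"] by auto
  have leafS: "Lf \<subseteq> S" 
  proof
    fix x assume x: "x \<in> Lf"
    then obtain s where s: "s \<in> S" "prefix x s" unfolding Lf_def P_def prefixes_of_def by auto
    show "x \<in> S"
    proof (rule ccontr)
      assume "x \<notin> S"
      then obtain t where t: "s = x @ t" "t \<noteq> []" using s by (metis append.right_neutral prefixE)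
      have "prefix (x @ [hd t]) s" using t by (metis append.assoc append_Cons append_Nil hd_Cons_tl prefixI)
      then have "x @ [hd t] \<in> children_of S x" using s unfolding children_of_def prefixes_of_def by auto
      then have "c x \<noteq> 0" unfolding c_def using cfin[of x] by auto
      then show False using x Lf_def by auto
    qed
  qed
  have eL: "[] \<notin> Lf" using c0 Lf_def by auto
  have LS1: "card Lf \<le> n - 1"
  proof -
    have "Lf \<subseteq> S - {[]}" using leafS eL by auto
    then have "card Lf \<le> card (S - {[]})" using fin by (simp add: card_mono)
    then show ?thesis using cS e fin by simp
  qed
  have finN: "finite (ctree_nodes S)" using finP unfolding ctree_nodes_def P_def by simp
  have eN: "[] \<in> ctree_nodes S" using eP unfolding ctree_nodes_def P_def by simp
  have Nsub: "ctree_nodes S \<subseteq> insert [] (Lf \<union> Br)"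
    unfolding ctree_nodes_def Lf_def Br_def P_def c_def by auto
  have Nbound: "card (ctree_nodes S) \<le> 2*n-3"
  proof (cases "c [] \<ge> 2")
    case True
    then have "ctree_nodes S \<subseteq> Lf \<union> Br" using Nsub eP unfolding Br_def by auto
    then have "card (ctree_nodes S) \<le> card (Lf \<union> Br)" using fL by (simp add: card_mono)
    also have "\<dots> \<le> card Lf + card Br" by (rule card_Un_le)
    finally show ?thesis using BL LS1 n3 by linarith
  next
    case False
    then have c1: "c [] = 1" using c0 by simp
    then have ch: "children_of S [] = {[a]}" using ach cfin unfolding c_def
      by (auto simp: card_Suc_eq)
    show ?thesis
    proof (cases "c [a] = 0")
      case True
      then have cha: "children_of S [a] = {}" unfolding c_def using cfin by simp
      have "P \<subseteq> {[], [a]}"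
      proof
        fix x assume x: "x \<in> P"
        show "x \<in> {[], [a]}"
        proof (cases x)
          case (Cons b y)
          have "prefix [b] x" using Cons by simp
          then have "[b] \<in> P" using x P_closed P_def by blast
          then have "[b] \<in> children_of S []" unfolding children_of_def P_def by auto
          then have b: "b = a" using ch by auto
          have "y = []"
          proof (rule ccontr)
            assume "y \<noteq> []"
            then obtain d z where "y = d # z" by (cases y) auto
            then have "prefix [a, d] x" using Cons b by simp
            then have "[a, d] \<in> P" using x P_closed P_def by blast
            then have "[a,d] \<in> children_of S [a]" unfolding children_of_def P_def by auto
            then show False using cha by auto
          qed
          then show ?thesis using Cons b by simp
        qed simp
      qed
      then have "card P \<le> card {[], [a]}" by (intro card_mono) simp_all
      then have "card P \<le> 2" by simp
      moreover have "card (ctree_nodes S) \<le> card P" using finP unfolding ctree_nodes_def P_def by (simp add: card_mono)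
      ultimately show ?thesis using n3 by linarith
    next
      case False
      then have "[a] \<notin> Lf" unfolding Lf_def by simp
      then have "Lf \<subseteq> S - {[], [a]}" using leafS eL by auto
      then have "card Lf \<le> card (S - {[], [a]})" using fin by (simp add: card_mono)
      also have "\<dots> = card S - 2" using e a fin by (simp add: card_Diff_subset)
      finally have L2: "card Lf \<le> n - 2" using cS by linarith
      have "card (ctree_nodes S) \<le> card (insert [] (Lf \<union> Br))" using Nsub fL by (simp add: card_mono)
      also have "\<dots> \<le> Suc (card (Lf \<union> Br))" by (rule card_insert_le_m1) simp_all
      also have "\<dots> \<le> Suc (card Lf + card Br)" using card_Un_le by simp
      finally show ?thesis using BL L2 n3 by linarith
    qed
  qed
  have Ebound: "card (ctree_edges S) \<le> card (ctree_nodes S - {[]})"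
  proof (rule card_inj_on_le[where f=snd])
    show "inj_on snd (ctree_edges S)"
    proof (rule inj_onI)
      fix p q assume p: "p \<in> ctree_edges S" and q: "q \<in> ctree_edges S" and eq: "snd p = snd q"
      obtain x y where pxy: "p = (x, y)" by fastforce
      obtain x' where qxy: "q = (x', y)" using eq pxy by (metis prod.collapse snd_conv)
      have h1: "x \<in> ctree_nodes S" "strict_prefix x y" "\<not> (\<exists>z \<in> ctree_nodes S. strict_prefix x z \<and> strict_prefix z y)"
        using p pxy unfolding ctree_edges_def by auto
      have h2: "x' \<in> ctree_nodes S" "strict_prefix x' y" "\<not> (\<exists>z \<in> ctree_nodes S. strict_prefix x' z \<and> strict_prefix z y)"
        using q qxy unfolding ctree_edges_def by auto
      have "prefix x x' \<or> prefix x' x"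
        by (rule prefix_same_cases[OF prefix_order.less_imp_le[OF h1(2)] prefix_order.less_imp_le[OF h2(2)]])
      then have "x = x'"
      proof
        assume "prefix x x'"
        then show ?thesis using h1 h2 unfolding prefix_order.le_less by blast
      next
        assume "prefix x' x"
        then show ?thesis using h1 h2 unfolding prefix_order.le_less by blast
      qed
      then show "p = q" using pxy qxy by simp
    qed
    show "snd ` ctree_edges S \<subseteq> ctree_nodes S - {[]}"
      unfolding ctree_edges_def by auto
    show "finite (ctree_nodes S - {[]})" using finN by simp
  qed
  have "card (ctree_nodes S - {[]}) = card (ctree_nodes S) - 1" using eN finN by simp
  then show ?thesis using Nbound Ebound n3 by linarith
qed

lemma find_u:
  assumes pV: "\<forall>v \<in> V - {r}. par v \<in> V"
  shows "v \<in> V \<Longrightarrow> v \<noteq> r \<Longrightarrow> (par ^^ k) v = r \<Longrightarrow> \<exists>u\<in>V. u \<noteq> r \<and> par u = r"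
proof (induction k arbitrary: v)
  case 0
  then show ?case by simp
next
  case (Suc k)
  show ?case
  proof (cases "par v = r")
    case True
    then show ?thesis using Suc.prems by blast
  next
    case False
    have "(par ^^ k) (par v) = r" using Suc.prems(3) by (simp add: funpow_Suc_right del: funpow.simps)
    moreover have "par v \<in> V" using pV Suc.prems by blast
    ultimately show ?thesis using Suc.IH False by blast
  qed
qed

theorem theorem2:
  fixes V :: "'v set" and r :: 'v and par :: "'v \<Rightarrow> 'v" and lab :: "'v \<Rightarrow> 'c"
  assumes "is_trie V r par lab"
    and "card V \<ge> 3"
  shows "card (ctree_nodes (Suffix_b V r par lab)) \<le> 2 * card V - 3
       \<and> card (ctree_edges (Suffix_b V r par lab)) \<le> 2 * card V - 4"
proof -
  define S where "S = Suffix_b V r par lab"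
  have finV: "finite V" and rV: "r \<in> V" and pV: "\<forall>v \<in> V - {r}. par v \<in> V"
    and reach: "\<forall>v \<in> V. \<exists>k. (par ^^ k) v = r"
    using assms(1) unfolding is_trie_def by auto
  have finS: "finite S" unfolding S_def Suffix_b_def using finV by simp
  have cS: "card S \<le> card V" unfolding S_def Suffix_b_def using finV by (rule card_image_le)
  have "depth r par r = 0" unfolding depth_def by simp
  then have "str_b r par lab r = []" unfolding str_b_def by simp
  then have eS: "[] \<in> S" unfolding S_def Suffix_b_def using rV by force
  have "V - {r} \<noteq> {}"
  proof
    assume "V - {r} = {}"
    then have "V \<subseteq> {r}" by auto
    then have "card V \<le> 1" using card_mono[of "{r}" V] by simp
    then show False using assms(2) by simp
  qed
  then obtain v where v: "v \<in> V" "v \<noteq> r" by auto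
  then obtain k where "(par ^^ k) v = r" using reach by blast
  then obtain u where u: "u \<in> V" "u \<noteq> r" "par u = r" using find_u[OF pV] v by blast
  have "depth r par u = 1" unfolding depth_def
  proof (rule Least_equality)
    show "(par ^^ 1) u = r" using u by simp
    fix y assume "(par ^^ y) u = r"
    then show "1 \<le> y" using u by (cases y) auto
  qed
  then have "str_b r par lab u = [lab u]" unfolding str_b_def by simp
  then have aS: "[lab u] \<in> S" unfolding S_def Suffix_b_def using u by force
  show ?thesis using ctree_bound[OF finS eS aS cS assms(2)] unfolding S_def by simp
qed

end
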